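(* For an integer $n>1$ define, for every integer $1\le r\le n-1$, $$E^{P}_{n}(r)=\frac{r}{n}\sum_{k=r+1}^{n}\frac{1+\frac{k}{n}}{k-1},$$ and let $\mathcal{M}(n)$ be a value of $r$ at which $E^P_n$ attains its maximum. Let $\mu=\frac12 W(2)=0.42630\dots$. Then (i) $\lim_{n\to\infty}\mathcal{M}(n)/n=\mu$; (ii) $\lim_{n\to\infty}E^P_n(\mathcal{M}(n))=\lim_{n\to\infty}E^P_n(\lfloor\mu n\rfloor)=\mu(1+\mu)=0.608037\dots$.
   Context: $W$ denotes the principal (main) branch of the Lambert $W$ function, i.e. the inverse of $z\mapsto ze^z$ on $[-1,\infty)$, so that $z=W(ze^z)$ for $z\ge -1$. *)

theory Defs
  imports Complex_Main
begin

definition lambertW :: "real \<Rightarrow> real" where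
  "lambertW y = (THE z. z \<ge> -1 \<and> z * exp z = y)"

definition EP :: "nat \<Rightarrow> nat \<Rightarrow> real" where
  "EP n r = (real r / real n) * (\<Sum>k = r+1..n. (1 + real k / real n) / (real k - 1))"

definition mu :: real where
  "mu = lambertW 2 / 2"

end

theory Submission imports Defs "HOL-Real_Asymp.Real_Asymp" begin

lemma W2: "lambertW 2 > 0 \<and> lambertW 2 \<le> 1 \<and> lambertW 2 * exp (lambertW 2) = 2"
proof -
  have c: "\<forall>x. 0 \<le> x \<and> x \<le> 1 \<longrightarrow> isCont (\<lambda>z::real. z * exp z) x"
    by (auto intro!: continuous_intros)
  have e1: "2 \<le> exp (1::real)" using exp_ge_add_one_self[of 1] by simp
  obtain z :: real where z: "0 \<le> z" "z \<le> 1" "z * exp z = 2"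
    using IVT[of "\<lambda>z::real. z * exp z" 0 2 1] c e1 by auto
  have pos: "w > 0" if "w * exp w = 2" for w :: real
  proof (rule ccontr)
    assume "\<not> w > 0"
    hence "w * exp w \<le> 0" by (simp add: mult_nonpos_nonneg)
    thus False using that by simp
  qed
  have mono: "a * exp a < b * exp b" if "0 < a" "a < b" for a b :: real
    using that by (intro mult_strict_mono) auto
  have uniq: "w = z" if "w \<ge> -1" "w * exp w = 2" for w
  proof -
    have "w > 0" "z > 0" using pos that z by auto
    show ?thesis
    proof (rule ccontr)
      assume "w \<noteq> z"
      hence "w < z \<or> z < w" by auto
      thus False using mono[of w z] mono[of z w] \<open>w>0\<close> \<open>z>0\<close> that z by auto
    qed
  qed
  have "lambertW 2 = z" unfolding lambertW_def
    by (rule the_equality) (use z uniq in auto)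
  thus ?thesis using z pos by auto
qed

lemma mu_facts: "mu > 0" "mu \<le> 1/2" "ln mu = - 2 * mu"
proof -
  show "mu > 0" "mu \<le> 1/2" using W2 by (auto simp: mu_def)
  have "mu * exp (2*mu) = 1" using W2 by (simp add: mu_def)
  hence "ln (mu * exp (2*mu)) = 0" by simp
  thus "ln mu = - 2 * mu" using \<open>mu > 0\<close> by (simp add: ln_mult)
qed

definition F :: "real \<Rightarrow> real" where "F x = x * (1 - ln x - x)"

lemma F_mu: "F mu = mu * (1 + mu)"
  using mu_facts by (simp add: F_def algebra_simps)

lemma F_bound: assumes "x > 0" shows "F x + (x - mu)^2 \<le> mu * (1 + mu)"
proof -
  have m: "mu > 0" "ln mu = - 2 * mu" using mu_facts by auto
  have "ln (mu / x) \<le> mu / x - 1" using ln_le_minus_one[of "mu/x"] m assms by simp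
  hence "ln mu - ln x \<le> mu / x - 1" using m assms by (simp add: ln_div)
  hence "x * (ln mu - ln x) \<le> x * (mu / x - 1)" using assms by (intro mult_left_mono) auto
  moreover have "x * (mu / x - 1) = mu - x" using assms by (simp add: field_simps)
  ultimately have "x * (ln mu - ln x) \<le> mu - x" by simp
  thus ?thesis using m unfolding F_def by (simp add: power2_eq_square algebra_simps)
qed

lemma ln_step: fixes a b :: real assumes "a > 0" "b > 0" shows "ln b - ln a \<le> b / a - 1"
  using ln_le_minus_one[of "b/a"] assms by (simp add: ln_div)

lemma harm_lower: assumes "r \<ge> 1" shows "ln (real (r + d + 1)) - ln (real r) \<le> (\<Sum>j=r..r+d. 1 / real j)"
proof (induction d)
  case 0
  have "ln (real (r+1)) - ln (real r) \<le> real (r+1) / real r - 1"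
    using assms by (intro ln_step) auto
  also have "\<dots> = 1 / real r" using assms by (simp add: field_simps)
  finally show ?case by simp
next
  case (Suc d)
  have "ln (real (r+d+2)) - ln (real (r + d + 1)) \<le> real (r+d+2) / real (r+d+1) - 1"
    by (intro ln_step) auto
  also have "\<dots> = 1 / real (r + Suc d)" by (simp add: field_simps)
  finally have "ln (real (r+d+2)) - ln (real (r + d + 1)) \<le> 1 / real (r + Suc d)" .
  thus ?case using Suc by (simp add: add.commute[of _ 2])
qed

lemma harm_upper: assumes "r \<ge> 1" shows "(\<Sum>j=r..r+d. 1 / real j) \<le> 1 / real r + ln (real (r + d)) - ln (real r)"
proof (induction d)
  case 0
  show ?case by simp
next
  case (Suc d)
  have "ln (real (r+d)) - ln (real (r + d + 1)) \<le> real (r+d) / real (r+d+1) - 1"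
    using assms by (intro ln_step) auto
  also have "\<dots> = - 1 / real (r + Suc d)" by (simp add: field_simps)
  finally have "ln (real (r+d)) - ln (real (r + d + 1)) \<le> - 1 / real (r + Suc d)" .
  thus ?case using Suc by simp
qed


lemma EP_eq: assumes "n > 1" "1 \<le> r" "r \<le> n - 1"
  shows "EP n r = (real r / real n) * ((1 + 1 / real n) * (\<Sum>j=r..n-1. 1 / real j) + (real n - real r) / real n)"
proof -
  have nn: "n = Suc (n - 1)" using assms by simp
  have "(\<Sum>k = r+1..n. (1 + real k / real n) / (real k - 1))
      = (\<Sum>j = r..n-1. (1 + real (Suc j) / real n) / (real (Suc j) - 1))"
    by (subst nn, subst sum.shift_bounds_cl_Suc_ivl[symmetric]) simp
  also have "\<dots> = (\<Sum>j = r..n-1. (1 + 1 / real n) * (1 / real j) + 1 / real n)"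
  proof (rule sum.cong)
    fix j assume "j \<in> {r..n-1}"
    hence "j \<ge> 1" using assms by auto
    thus "(1 + real (Suc j) / real n) / (real (Suc j) - 1) = (1 + 1 / real n) * (1 / real j) + 1 / real n"
      using assms by (simp add: field_simps)
  qed simp
  also have "\<dots> = (1 + 1 / real n) * (\<Sum>j=r..n-1. 1 / real j) + real (n - r) / real n"
    using assms by (simp add: sum.distrib sum_distrib_left)
  also have "real (n - r) = real n - real r" using assms by simp
  finally show ?thesis unfolding EP_def by simp
qed

lemma EP_approx: assumes "n > 1" "1 \<le> r" "r \<le> n - 1"
  shows "F (real r / real n) \<le> EP n r \<and> EP n r \<le> F (real r / real n) + 3 / real n"
proof -
  define x where "x = real r / real n"
  define S where "S = (\<Sum>j=r..n-1. 1 / real j)"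
  define L where "L = ln (real n) - ln (real r)"
  have rn: "real r < real n" "real r \<ge> 1" "real n > 1" using assms by auto
  have x0: "x > 0" "x < 1" using rn by (auto simp: x_def)
  have lnx: "ln x = - L" using rn by (simp add: x_def L_def ln_div)
  have d: "n - 1 = r + (n - 1 - r)" using assms by simp
  have SL: "L \<le> S" using harm_lower[OF assms(2), of "n - 1 - r"] assms
    by (simp add: S_def L_def d[symmetric])
  have h: "S \<le> 1 / real r + ln (real (n - 1)) - ln (real r)" using harm_upper[OF assms(2), of "n - 1 - r"] assms
    by (simp add: S_def d[symmetric] del: of_nat_diff)
  have "ln (real (n - 1)) \<le> ln (real n)" using assms by simp
  hence SU: "S \<le> 1 / real r + L" using h by (simp add: L_def)
  have L0: "L \<ge> 0" using rn by (simp add: L_def)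
  have xL: "x * L \<le> 1"
  proof -
    have "ln (1/x) \<le> 1/x - 1" using ln_le_minus_one[of "1/x"] x0 by simp
    hence "L \<le> 1/x - 1" using lnx x0 by (simp add: ln_div)
    hence "x * L \<le> x * (1/x - 1)" using x0 by (intro mult_left_mono) auto
    also have "\<dots> = 1 - x" using x0 by (simp add: field_simps)
    finally show ?thesis using x0 by simp
  qed
  have EPe: "EP n r = x * ((1 + 1 / real n) * S + (1 - x))"
    using EP_eq[OF assms] rn by (simp add: x_def S_def diff_divide_distrib)
  have Fe: "F x = x * (L + 1 - x)" by (simp add: F_def lnx)
  have diff: "EP n r - F x = x * (S - L) + x * S / real n"
    by (simp add: EPe Fe algebra_simps)
  have "x * (S - L) \<le> x * (1 / real r)" using SU x0 by (intro mult_left_mono) auto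
  also have "x * (1 / real r) = 1 / real n" using rn by (simp add: x_def)
  finally have a1: "x * (S - L) \<le> 1 / real n" .
  have "x * S \<le> x * (1 / real r + L)" using SU x0 by (intro mult_left_mono) auto
  also have "\<dots> = 1 / real n + x * L" using rn by (simp add: x_def algebra_simps)
  also have "\<dots> \<le> 2" proof -
    have "1 / real n \<le> 1" using rn by simp
    thus ?thesis using xL by linarith
  qed
  finally have "x * S / real n \<le> 2 / real n" using rn by (simp add: divide_right_mono)
  hence up: "EP n r - F x \<le> 3 / real n" using a1 diff by simp
  have "0 \<le> x * (S - L)" using SL x0 by simp
  moreover have "0 \<le> x * S / real n" using SL L0 x0 rn by simp
  ultimately have "0 \<le> EP n r - F x" using diff by linarith
  thus ?thesis using up by (simp add: x_def)
qed


theorem proposition4: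
  fixes M :: "nat \<Rightarrow> nat"
  assumes M_range: "\<And>n. n > 1 \<Longrightarrow> 1 \<le> M n \<and> M n \<le> n - 1"
      and M_max: "\<And>n r. n > 1 \<Longrightarrow> 1 \<le> r \<Longrightarrow> r \<le> n - 1 \<Longrightarrow> EP n r \<le> EP n (M n)"
  shows "((\<lambda>n. real (M n) / real n) \<longlonglongrightarrow> mu) \<and>
         ((\<lambda>n. EP n (M n)) \<longlonglongrightarrow> mu * (1 + mu)) \<and>
         ((\<lambda>n. EP n (nat \<lfloor>mu * real n\<rfloor>)) \<longlonglongrightarrow> mu * (1 + mu))"
proof -
  have m: "mu > 0" "mu \<le> 1/2" using mu_facts by auto
  define R where "R n = nat \<lfloor>mu * real n\<rfloor>" for n
  have Rval: "real (R n) = of_int \<lfloor>mu * real n\<rfloor>" for n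
    using m by (simp add: R_def)
  obtain N :: nat where N: "real N \<ge> 1 / mu" using real_arch_simple by blast
  have Rrange: "1 \<le> R n \<and> R n \<le> n - 1" if "n \<ge> max 2 N" for n
  proof -
    have "mu * real n \<ge> mu * (1/mu)" using that N m by (intro mult_left_mono) auto
    hence a: "mu * real n \<ge> 1" using m by simp
    have n2: "real n \<ge> 2" using that by simp
    have "mu * real n \<le> 1/2 * real n" using m by (intro mult_right_mono) auto
    hence b: "mu * real n \<le> real n - 1" using n2 by linarith
    have "1 \<le> \<lfloor>mu * real n\<rfloor>" using a by (simp add: le_floor_iff)
    moreover have "mu * real n < real_of_int (int n - 1) + 1" using b by simp
    hence "\<lfloor>mu * real n\<rfloor> \<le> int n - 1" by (simp only: floor_le_iff)
    ultimately show ?thesis using that unfolding R_def by linarith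
  qed
  have ev: "eventually (\<lambda>n. n > 1 \<and> 1 \<le> R n \<and> R n \<le> n - 1) sequentially"
    unfolding eventually_sequentially using Rrange by (intro exI[of _ "max 2 N"]) auto
  have lim3: "(\<lambda>n. 3 / real n) \<longlonglongrightarrow> 0" by real_asymp
  have Rlim: "(\<lambda>n. real (R n) / real n) \<longlonglongrightarrow> mu"
  proof (rule tendsto_sandwich[of "\<lambda>n. mu - 1 / real n" _ _ "\<lambda>n. mu"])
    show "eventually (\<lambda>n. mu - 1 / real n \<le> real (R n) / real n) sequentially"
      unfolding eventually_sequentially
    proof (intro exI[of _ 1] allI impI)
      fix n :: nat assume "n \<ge> 1"
      have "mu * real n - 1 \<le> real (R n)" unfolding Rval by linarith
      hence "(mu * real n - 1) / real n \<le> real (R n) / real n" by (simp add: divide_right_mono)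
      moreover have "(mu * real n - 1) / real n = mu - 1 / real n" using \<open>n\<ge>1\<close> by (simp add: field_simps)
      ultimately show "mu - 1 / real n \<le> real (R n) / real n" by simp
    qed
    show "eventually (\<lambda>n. real (R n) / real n \<le> mu) sequentially"
      unfolding eventually_sequentially
    proof (intro exI[of _ 1] allI impI)
      fix n :: nat assume "n \<ge> 1"
      have "real (R n) \<le> mu * real n" unfolding Rval by linarith
      thus "real (R n) / real n \<le> mu" using \<open>n\<ge>1\<close> by (simp add: field_simps)
    qed
    show "(\<lambda>n. mu - 1 / real n) \<longlonglongrightarrow> mu" by real_asymp
  qed simp
  have cF: "isCont F mu" unfolding F_def using m by (intro continuous_intros) auto
  have FR: "(\<lambda>n. F (real (R n) / real n)) \<longlonglongrightarrow> mu * (1 + mu)"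
    using isCont_tendsto_compose[OF cF Rlim] F_mu by simp
  have FR3: "(\<lambda>n. F (real (R n) / real n) + 3 / real n) \<longlonglongrightarrow> mu * (1 + mu)"
    using tendsto_add[OF FR lim3] by simp
  have c3: "(\<lambda>n. mu * (1 + mu) + 3 / real n) \<longlonglongrightarrow> mu * (1 + mu)"
    using tendsto_add[OF tendsto_const lim3] by simp
  have L3: "(\<lambda>n. EP n (R n)) \<longlonglongrightarrow> mu * (1 + mu)"
    by (rule tendsto_sandwich[OF _ _ FR FR3]; rule eventually_mono[OF ev]) (use EP_approx in auto)
  have evM: "eventually (\<lambda>n. F (real (R n) / real n) \<le> EP n (M n) \<and>
       EP n (M n) \<le> F (real (M n) / real n) + 3 / real n \<and> real (M n) / real n > 0) sequentially"
  proof (rule eventually_mono[OF ev], safe)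
    fix n assume h: "1 < n" "1 \<le> R n" "R n \<le> n - 1"
    show "F (real (R n) / real n) \<le> EP n (M n)"
      using EP_approx[OF h] M_max[OF h] by linarith
    show "EP n (M n) \<le> F (real (M n) / real n) + 3 / real n"
      using EP_approx[of n "M n"] M_range[OF h(1)] h by auto
    show "real (M n) / real n > 0" using M_range[OF h(1)] h by auto
  qed
  have L2: "(\<lambda>n. EP n (M n)) \<longlonglongrightarrow> mu * (1 + mu)"
  proof (rule tendsto_sandwich[OF _ _ FR c3])
    show "eventually (\<lambda>n. F (real (R n) / real n) \<le> EP n (M n)) sequentially"
      by (rule eventually_mono[OF evM]) auto
    show "eventually (\<lambda>n. EP n (M n) \<le> mu * (1 + mu) + 3 / real n) sequentially"
    proof (rule eventually_mono[OF evM], elim conjE)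
      fix n assume "EP n (M n) \<le> F (real (M n) / real n) + 3 / real n" "real (M n) / real n > 0"
      thus "EP n (M n) \<le> mu * (1 + mu) + 3 / real n"
        using F_bound[of "real (M n) / real n"] zero_le_power2[of "real (M n) / real n - mu"] by linarith
    qed
  qed
  have sq: "(\<lambda>n. (real (M n) / real n - mu)^2) \<longlonglongrightarrow> 0"
  proof (rule tendsto_sandwich[of "\<lambda>n. 0" _ _ "\<lambda>n. mu * (1 + mu) - EP n (M n) + 3 / real n"])
    show "eventually (\<lambda>n. 0 \<le> (real (M n) / real n - mu)^2) sequentially" by simp
    show "eventually (\<lambda>n. (real (M n) / real n - mu)^2 \<le> mu * (1 + mu) - EP n (M n) + 3 / real n) sequentially"
    proof (rule eventually_mono[OF evM], elim conjE)
      fix n assume "EP n (M n) \<le> F (real (M n) / real n) + 3 / real n" "real (M n) / real n > 0"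
      thus "(real (M n) / real n - mu)^2 \<le> mu * (1 + mu) - EP n (M n) + 3 / real n"
        using F_bound[of "real (M n) / real n"] by linarith
    qed
    show "(\<lambda>n. mu * (1 + mu) - EP n (M n) + 3 / real n) \<longlonglongrightarrow> 0"
      using tendsto_add[OF tendsto_diff[OF tendsto_const[of "mu * (1 + mu)"] L2] lim3] by simp
  qed simp
  have "(\<lambda>n. sqrt ((real (M n) / real n - mu)^2)) \<longlonglongrightarrow> sqrt 0"
    by (rule tendsto_real_sqrt[OF sq])
  hence "(\<lambda>n. \<bar>real (M n) / real n - mu\<bar>) \<longlonglongrightarrow> 0" by simp
  hence L1: "(\<lambda>n. real (M n) / real n) \<longlonglongrightarrow> mu"
    by (simp add: tendsto_rabs_zero_iff LIM_zero_iff)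
  show ?thesis using L1 L2 L3 unfolding R_def by simp
qed

end
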